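(* For every nonnegative integer $n$, $$\sum_{k=0}^{\infty}(-1)^k(4k+1)\,\frac{(-4n)_k\,(-n+\tfrac38)_k\,(\tfrac12)_k}{k!\,(n+\tfrac98)_k\,(4n+\tfrac32)_k}=\left(\frac{2^8}{5^5}\right)^n\frac{(\tfrac78)_n(\tfrac38)_n(\tfrac98)_n^2}{(\tfrac{33}{40})_n(\tfrac{41}{40})_n(\tfrac{9}{40})_n(\tfrac{17}{40})_n}.$$ (The sum is finite, since $(-4n)_k=0$ for $k>4n$.)
   Context: $(a)_j=\Gamma(a+j)/\Gamma(a)=a(a+1)\cdots(a+j-1)$ denotes the rising factorial (Pochhammer symbol), with $(a)_0=1$. *)

theory Defs
  imports "HOL-Analysis.Analysis"
begin

end

theory Submission
  imports Defs
begin

definition dp :: "real \<Rightarrow> real \<Rightarrow> real" where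
"dp x K = ((-697549073760) + (-16540609738176) * x + (-173927194085376) * x^2 + (-1074219529085952) * x^3 + (-4347430249701376) * x^4 + (-12164937454977024) * x^5 + (-24169981369384960) * x^6 + (-34406845812572160) * x^7 + (-34876949671182336) * x^8 + (-24583152630497280) * x^9 + (-11451001286426624) * x^10 + (-3168603532689408) * x^11 + (-394312357511168) * x^12) + ((-249882724224) + (-4349326046976) * x + (-33513752945664) * x^2 + (-150242664972288) * x^3 + (-433440394051584) * x^4 + (-840391081328640) * x^5 + (-1108949256372224) * x^6 + (-983589118279680) * x^7 + (-561397322743808) * x^8 + (-186277026594816) * x^9 + (-27298812133376) * x^10) * K + ((455069809152) + (8150377185792) * x + (64104239179776) * x^2 + (291653917540352) * x^3 + (850392196317184) * x^4 + (1661344914866176) * x^5 + (2203796155400192) * x^6 + (1961429154398208) * x^7 + (1121787475656704) * x^8 + (372554053189632) * x^9 + (54597624266752) * x^10) * K^2 + ((175917256704) + (2168590233600) * x + (11607480827904) * x^2 + (35168335953920) * x^3 + (65794216034304) * x^4 + (77663695798272) * x^5 + (56390907330560) * x^6 + (22996328644608) * x^7 + (4028679323648) * x^8) * K^3 + ((-161646492672) + (-2046354665472) * x + (-11180142133248) * x^2 + (-34382237401088) * x^3 + (-64993594703872) * x^4 + (-77237218967552) * x^5 + (-56298297098240) * x^6 + (-22996328644608) * x^7 + (-4028679323648) * x^8) * K^4 + ((-33937698816) + (-291621371904) * x + (-1022301044736) * x^2 + (-1884005859328) * x^3 + (-1920739573760) * x^4 + (-1023544393728) * x^5 + (-222264557568)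 * x^6) * K^5 + ((21584683008) + (188600942592) * x + (670494621696) * x^2 + (1247235014656) * x^3 + (1277987651584) * x^4 + (682362929152) * x^5 + (148176371712) * x^6) * K^6 + ((1783627776) + (9965666304) * x + (18924699648) * x^2 + (15032385536) * x^3 + (4294967296) * x^4) * K^7 + ((-891813888) + (-4982833152) * x + (-9462349824) * x^2 + (-7516192768) * x^3 + (-2147483648) * x^4) * K^8"

definition denp :: "real \<Rightarrow> real" where
"denp x = (4*x+1)*(4*x+2)*(4*x+3)*(4*x+4)*(8*x+5)*(8*x+9)*(8*x+3)*(8*x+5)*(8*x+7)*(8*x+9)*(40*x+33)*(40*x+41)*(40*x+9)*(40*x+17)"

definition qq :: "real \<Rightarrow> real \<Rightarrow> real" where
"qq x K = (4*K+1) * (K-4*x-1)*(K-4*x-2)*(K-4*x-3)*(K-4*x-4)*(K-x-5/8)*(K+x+9/8)*(K+4*x+3/2)*(K+4*x+5/2)*(K+4*x+7/2)*(K+4*x+9/2)"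

definition fac :: "real \<Rightarrow> real" where
"fac x = (-4*x-1)*(-4*x-2)*(-4*x-3)*(-4*x-4)*(-x-5/8)*(x+9/8)*(4*x+3/2)*(4*x+5/2)*(4*x+7/2)*(4*x+9/2)"

definition rr :: "real \<Rightarrow> real" where
"rr x = (2^8/5^5) * ((x+7/8)*(x+3/8)*(x+9/8)^2) / ((x+33/40)*(x+41/40)*(x+9/40)*(x+17/40))"

lemma key: fixes x K :: real shows
"- ((K - 4*x - 4) * (K - x - 5/8) * (K + 1/2)) * dp x (K+1) - K * (K + x + 9/8) * (K + 4*x + 9/2) * dp x K
 - 1073741824 * ((x+7/8)*(x+3/8)*(x+9/8)^2) * qq x K
 = 5 * denp x * (4*K+1)"
  unfolding dp_def denp_def qq_def by algebra

lemma ratio: fixes x :: real assumes "x \<ge> 0"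
  shows "rr x / fac x = - 1073741824 * ((x+7/8)*(x+3/8)*(x+9/8)^2) / (5 * denp x)"
proof -
  have "fac x \<noteq> 0" "denp x \<noteq> 0" using assms unfolding fac_def denp_def
    by (auto simp: add_eq_0_iff)
  show ?thesis unfolding rr_def using assms \<open>fac x \<noteq> 0\<close> \<open>denp x \<noteq> 0\<close>
    unfolding fac_def denp_def by (simp add: field_simps)
qed

lemma sh1: "pochhammer (a - 1) k * (a - 1 + of_nat k) = pochhammer a k * (a - 1 :: real)"
proof -
  have "pochhammer (a - 1) (Suc k) = (a - 1) * pochhammer a k" using pochhammer_rec[of "a-1" k] by simp
  moreover have "pochhammer (a - 1) (Suc k) = (a - 1 + of_nat k) * pochhammer (a-1) k" by (rule pochhammer_rec')
  ultimately show ?thesis by (simp add: mult.commute)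
qed

lemma sh4: "pochhammer (a - 4) k * ((a - 4 + of_nat k) * (a - 3 + of_nat k) * (a - 2 + of_nat k) * (a - 1 + of_nat k))
   = pochhammer a k * ((a - 4) * (a - 3) * (a - 2) * (a - 1 :: real))"
proof -
  have e1: "pochhammer (a - 4) k * (a - 4 + of_nat k) = pochhammer (a-3) k * (a - 4)" using sh1[of "a-3" k] by simp
  have e2: "pochhammer (a - 3) k * (a - 3 + of_nat k) = pochhammer (a-2) k * (a - 3)" using sh1[of "a-2" k] by simp
  have e3: "pochhammer (a - 2) k * (a - 2 + of_nat k) = pochhammer (a-1) k * (a - 2)" using sh1[of "a-1" k] by simp
  have e4: "pochhammer (a - 1) k * (a - 1 + of_nat k) = pochhammer a k * (a - 1)" using sh1[of a k] by simp
  show ?thesis using e1 e2 e3 e4 by algebra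
qed

definition Fs :: "nat \<Rightarrow> nat \<Rightarrow> real" where
"Fs n k = (-1::real)^k * (4 * real k + 1) *
            (pochhammer (- 4 * real n) k * pochhammer (- real n + 3/8) k * pochhammer (1/2) k)
          / (fact k * pochhammer (real n + 9/8) k * pochhammer (4 * real n + 3/2) k)"

definition Bt :: "real \<Rightarrow> nat \<Rightarrow> real" where
"Bt x k = (-1::real)^k * (pochhammer (- 4 * x - 4) k * pochhammer (- x - 5/8) k * pochhammer (1/2) k)
          / (fact k * pochhammer (x + 17/8) k * pochhammer (4 * x + 11/2) k)"

lemma L1: "Fs (Suc n) k = Bt (real n) k * (4 * real k + 1)"
proof -
  have a: "- 4 * real (Suc n) = - 4 * real n - 4" "- real (Suc n) + 3/8 = - real n - 5/8"
    "real (Suc n) + 9/8 = real n + 17/8" "4 * real (Suc n) + 3/2 = 4 * real n + 11/2" by simp_all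
  show ?thesis unfolding Fs_def Bt_def a by simp
qed

lemma L3aux: fixes s pA pB pC fk pD pE A1 A2 A3 w u v :: real
  assumes "fk > 0" "pD > 0" "pE > 0" "w > 0" "u > 0" "v > 0"
  shows "(- s) * ((A1 * pA) * (A2 * pB) * (A3 * pC)) / ((w * fk) * (u * pD) * (v * pE)) * (w * u * v)
     = - (s * (pA * pB * pC) / (fk * pD * pE)) * (A1 * A2 * A3)"
  using assms by (simp add: field_simps)

lemma L3: "Bt x (Suc k) * (real (Suc k) * (x + 17/8 + real k) * (4*x + 11/2 + real k))
   = - Bt x k * ((- 4 * x - 4 + real k) * (- x - 5/8 + real k) * (1/2 + real k))" if "x \<ge> 0"
proof -
  have p1: "pochhammer (x + 17/8) k > 0" "pochhammer (4*x + 11/2) k > 0"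
    using that by (auto intro!: pochhammer_pos)
  have p2: "x + 17/8 + real k > 0" "4*x + 11/2 + real k > 0" "real (Suc k) > 0" using that by auto
  have "fact k > (0::real)" by simp
  have e: "Bt x (Suc k) = (- ((-1)^k)) * (((- 4 * x - 4 + real k) * pochhammer (- 4 * x - 4) k) * ((- x - 5/8 + real k) * pochhammer (- x - 5/8) k)
     * ((1/2 + real k) * pochhammer (1/2) k)) / ((real (Suc k) * fact k) * ((x + 17/8 + real k) * pochhammer (x + 17/8) k) * ((4 * x + 11/2 + real k) * pochhammer (4 * x + 11/2) k))"
    unfolding Bt_def pochhammer_rec' fact_Suc by simp
  show ?thesis apply (subst e) unfolding Bt_def
    by (rule L3aux[OF \<open>fact k > 0\<close> p1 p2(3) p2(1) p2(2)])
qed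

lemma L2aux: fixes s t N1 N2 N3 M1 M2 fk D1 D2 E1 E2 a1 a2 a3 a4 c1 c2 c3 c4 :: real
  assumes "fk > 0" "D1 > 0" "D2 > 0" "E1 > 0" "E2 > 0"
    and h1: "M1*a1 = N1*c1" and h2: "M2*a2 = N2*c2" and h3: "D1*a3 = E1*c3" and h4: "D2*a4 = E2*c4"
  shows "s*t*(N1*N2*N3)/(fk*D1*D2) * (c1*c2*c3*c4) = s*(M1*M2*N3)/(fk*E1*E2) * (t*a1*a2*a3*a4)"
proof -
  have "s*t*(N1*N2*N3)/(fk*D1*D2) * (c1*c2*c3*c4) = s*t*N3/fk*(N1*c1)*(N2*c2)*(c3/D1)*(c4/D2)"
    using assms(1-5) by (simp add: field_simps)
  also have "c3/D1 = a3/E1" using h3 assms by (simp add: field_simps)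
  also have "c4/D2 = a4/E2" using h4 assms by (simp add: field_simps)
  also have "s*t*N3/fk*(N1*c1)*(N2*c2)*(a3/E1)*(a4/E2) = s*t*N3/fk*(M1*a1)*(M2*a2)*(a3/E1)*(a4/E2)" by (simp only: h1[symmetric] h2[symmetric])
  also have "s*t*N3/fk*(M1*a1)*(M2*a2)*(a3/E1)*(a4/E2) = s*(M1*M2*N3)/(fk*E1*E2) * (t*a1*a2*a3*a4)"
    using assms(1-5) by (simp add: field_simps)
  finally show ?thesis .
qed

lemma L2: "Fs n k * fac (real n) = Bt (real n) k * qq (real n) (real k)"
proof -
  define x where "x = real n"
  have x0: "x \<ge> 0" unfolding x_def by simp
  have h1: "pochhammer (- 4 * x - 4) k * ((- 4 * x - 4 + real k) * (- 4 * x - 3 + real k) * (- 4 * x - 2 + real k) * (- 4 * x - 1 + real k))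
    = pochhammer (- 4 * x) k * ((- 4 * x - 4) * (- 4 * x - 3) * (- 4 * x - 2) * (- 4 * x - 1))"
    using sh4[of "- 4 * x" k] by simp
  have h2: "pochhammer (- x - 5/8) k * (- x - 5/8 + real k) = pochhammer (- x + 3/8) k * (- x - 5/8)"
  proof -
    have e: "- x + 3/8 - 1 = - x - 5/8" by simp
    show ?thesis using sh1[of "- x + 3/8" k] unfolding e .
  qed
  have h3: "pochhammer (x + 9/8) k * (x + 9/8 + real k) = pochhammer (x + 17/8) k * (x + 9/8)"
  proof -
    have e: "x + 17/8 - 1 = x + 9/8" by simp
    show ?thesis using sh1[of "x + 17/8" k] unfolding e .
  qed
  have h4: "pochhammer (4 * x + 3/2) k * ((4 * x + 3/2 + real k) * (4 * x + 5/2 + real k) * (4 * x + 7/2 + real k) * (4 * x + 9/2 + real k))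
    = pochhammer (4 * x + 11/2) k * ((4 * x + 3/2) * (4 * x + 5/2) * (4 * x + 7/2) * (4 * x + 9/2))"
  proof -
    have e: "4 * x + 11/2 - 4 = 4 * x + 3/2" "4 * x + 11/2 - 3 = 4 * x + 5/2" "4 * x + 11/2 - 2 = 4 * x + 7/2" "4 * x + 11/2 - 1 = 4 * x + 9/2" by simp_all
    show ?thesis using sh4[of "4 * x + 11/2" k] unfolding e .
  qed
  have pos: "fact k > (0::real)" "pochhammer (x + 9/8) k > 0" "pochhammer (4 * x + 3/2) k > 0"
     "pochhammer (x + 17/8) k > 0" "pochhammer (4 * x + 11/2) k > 0"
    using x0 by (auto intro!: pochhammer_pos)
  have "Fs n k * ((- 4 * x - 4) * (- 4 * x - 3) * (- 4 * x - 2) * (- 4 * x - 1) * (- x - 5/8) * (x + 9/8) *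
     ((4 * x + 3/2) * (4 * x + 5/2) * (4 * x + 7/2) * (4 * x + 9/2)))
    = Bt x k * ((4 * real k + 1) * ((- 4 * x - 4 + real k) * (- 4 * x - 3 + real k) * (- 4 * x - 2 + real k) * (- 4 * x - 1 + real k))
       * (- x - 5/8 + real k) * (x + 9/8 + real k) * ((4 * x + 3/2 + real k) * (4 * x + 5/2 + real k) * (4 * x + 7/2 + real k) * (4 * x + 9/2 + real k)))"
    unfolding Fs_def Bt_def x_def[symmetric]
    by (rule L2aux[OF pos(1) pos(2) pos(3) pos(4) pos(5) h1 h2 h3 h4])
  moreover have "fac x = (- 4 * x - 4) * (- 4 * x - 3) * (- 4 * x - 2) * (- 4 * x - 1) * (- x - 5/8) * (x + 9/8) *
     ((4 * x + 3/2) * (4 * x + 5/2) * (4 * x + 7/2) * (4 * x + 9/2))" unfolding fac_def by algebra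
  moreover have "qq x (real k) = ((4 * real k + 1) * ((- 4 * x - 4 + real k) * (- 4 * x - 3 + real k) * (- 4 * x - 2 + real k) * (- 4 * x - 1 + real k))
       * (- x - 5/8 + real k) * (x + 9/8 + real k) * ((4 * x + 3/2 + real k) * (4 * x + 5/2 + real k) * (4 * x + 7/2 + real k) * (4 * x + 9/2 + real k)))"
    unfolding qq_def by algebra
  ultimately show ?thesis unfolding x_def by simp
qed

definition G :: "real \<Rightarrow> nat \<Rightarrow> real" where
"G x k = Bt x k * (real k * (real k + x + 9/8) * (real k + 4*x + 9/2)) * dp x (real k) / (5 * denp x)"

lemma denp_pos: "x \<ge> 0 \<Longrightarrow> denp x > 0" unfolding denp_def by simp
lemma fac_ne: "x \<ge> 0 \<Longrightarrow> fac x \<noteq> 0" unfolding fac_def by (auto simp: add_eq_0_iff)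

lemma Tel: "G (real n) (Suc k) - G (real n) k = Fs (Suc n) k - rr (real n) * Fs n k"
proof -
  define x where "x = real n"
  define K where "K = real k"
  have x0: "x \<ge> 0" unfolding x_def by simp
  have d: "denp x > 0" using denp_pos[OF x0] .
  have fc: "fac x \<noteq> 0" using fac_ne[OF x0] .
  have e1: "real (Suc k) * (real (Suc k) + x + 9/8) * (real (Suc k) + 4*x + 9/2) = real (Suc k) * (x + 17/8 + real k) * (4*x+11/2+real k)"
    by (simp add: algebra_simps)
  have g1: "G x (Suc k) = - Bt x k * ((- 4 * x - 4 + K) * (- x - 5/8 + K) * (1/2 + K)) * dp x (K+1) / (5*denp x)"
    unfolding G_def e1 L3[OF x0] K_def by (simp add: add.commute)
  have g0: "G x k = Bt x k * (K * (K + x + 9/8) * (K + 4*x + 9/2)) * dp x K / (5 * denp x)"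
    unfolding G_def K_def ..
  have kk: "- ((- 4 * x - 4 + K) * (- x - 5/8 + K) * (1/2 + K)) * dp x (K+1) - K * (K + x + 9/8) * (K + 4*x + 9/2) * dp x K
     = 5 * denp x * (4*K+1) + 1073741824 * ((x+7/8)*(x+3/8)*(x+9/8)^2) * qq x K"
  proof -
    have h: "(- 4 * x - 4 + K) * (- x - 5/8 + K) * (1/2 + K) = (K - 4*x - 4) * (K - x - 5/8) * (K + 1/2)" by algebra
    show ?thesis unfolding h using key[where x=x and K=K] by linarith
  qed
  have f1: "Fs (Suc n) k = Bt x k * (4*K+1)" unfolding L1 x_def K_def ..
  have f2: "Fs n k = Bt x k * qq x K / fac x" using L2[of n k] fc unfolding x_def[symmetric] K_def[symmetric]
    by (simp add: field_simps)
  have "G x (Suc k) - G x k = Bt x k * (- ((- 4 * x - 4 + K) * (- x - 5/8 + K) * (1/2 + K)) * dp x (K+1) - K * (K + x + 9/8) * (K + 4*x + 9/2) * dp x K) / (5 * denp x)"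
    unfolding g1 g0 using d by (simp add: field_simps)
  also have "\<dots> = Bt x k * (5 * denp x * (4*K+1) + 1073741824 * ((x+7/8)*(x+3/8)*(x+9/8)^2) * qq x K) / (5 * denp x)"
    unfolding kk ..
  also have "\<dots> = Bt x k * (4*K+1) - Bt x k * qq x K * (- 1073741824 * ((x+7/8)*(x+3/8)*(x+9/8)^2) / (5 * denp x))"
    using d by (simp add: field_simps)
  also have "\<dots> = Bt x k * (4*K+1) - Bt x k * qq x K * (rr x / fac x)"
    unfolding ratio[OF x0] ..
  also have "\<dots> = Fs (Suc n) k - rr x * Fs n k"
    unfolding f1 f2 by simp
  finally show ?thesis unfolding x_def .
qed

lemma Fz: "k > 4 * n \<Longrightarrow> Fs n k = 0"
proof -
  assume "k > 4 * n"
  have "- 4 * real n = - of_nat (4 * n)" by simp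
  then have "pochhammer (- 4 * real n) k = 0" using pochhammer_of_nat_eq_0_iff[of "4*n" k] \<open>k > 4 * n\<close> by simp
  then show ?thesis unfolding Fs_def by simp
qed

lemma Bz: "Bt (real n) (4 * n + 5) = 0"
proof -
  have "- 4 * real n - 4 = - of_nat (4 * n + 4)" by simp
  then have "pochhammer (- 4 * real n - 4) (4 * n + 5) = 0" using pochhammer_of_nat_eq_0_iff[of "4*n+4" "4*n+5"] by simp
  then show ?thesis unfolding Bt_def by simp
qed

lemma Ssum: "M \<ge> 4 * n + 1 \<Longrightarrow> suminf (Fs n) = (\<Sum>k<M. Fs n k)"
  by (rule suminf_finite) (auto intro: Fz)

lemma Sstep: "suminf (Fs (Suc n)) = rr (real n) * suminf (Fs n)"
proof -
  have "(\<Sum>k<4*n+5. G (real n) (Suc k) - G (real n) k) = G (real n) (4*n+5) - G (real n) 0"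
    by (rule sum_lessThan_telescope)
  also have "\<dots> = 0" unfolding G_def Bz by simp
  finally have "(\<Sum>k<4*n+5. Fs (Suc n) k - rr (real n) * Fs n k) = 0" unfolding Tel .
  then have "(\<Sum>k<4*n+5. Fs (Suc n) k) = rr (real n) * (\<Sum>k<4*n+5. Fs n k)"
    by (simp add: sum_subtractf sum_distrib_left)
  moreover have "suminf (Fs (Suc n)) = (\<Sum>k<4*n+5. Fs (Suc n) k)" by (rule Ssum) simp
  moreover have "suminf (Fs n) = (\<Sum>k<4*n+5. Fs n k)" by (rule Ssum) simp
  ultimately show ?thesis by simp
qed

definition R :: "nat \<Rightarrow> real" where
"R n = ((2^8) / (5^5)) ^ n *
          (pochhammer (7/8) n * pochhammer (3/8) n * (pochhammer (9/8) n)^2)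
          / (pochhammer (33/40) n * pochhammer (41/40) n * pochhammer (9/40) n * pochhammer (17/40) n)"

lemma Rstep: "R (Suc n) = rr (real n) * R n"
proof -
  have p: "pochhammer (33/40) n > (0::real)" "pochhammer (41/40) n > (0::real)"
     "pochhammer (9/40) n > (0::real)" "pochhammer (17/40) n > (0::real)"
    by (auto intro!: pochhammer_pos)
  show ?thesis unfolding R_def rr_def pochhammer_rec' using p
    apply (simp add: field_simps) by algebra
qed

lemma main: "suminf (Fs n) = R n"
proof (induction n)
  case 0
  have "suminf (Fs 0) = (\<Sum>k<1. Fs 0 k)" by (rule Ssum) simp
  also have "\<dots> = 1" by (simp add: Fs_def)
  finally show ?case by (simp add: R_def)
next
  case (Suc n)
  then show ?case using Sstep Rstep by simp
qed

theorem theorem8: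
  fixes n :: nat
  shows "(\<Sum>k. (-1::real)^k * (4 * real k + 1) *
            (pochhammer (- 4 * real n) k * pochhammer (- real n + 3/8) k * pochhammer (1/2) k)
          / (fact k * pochhammer (real n + 9/8) k * pochhammer (4 * real n + 3/2) k))
        = ((2^8) / (5^5)) ^ n *
          (pochhammer (7/8) n * pochhammer (3/8) n * (pochhammer (9/8) n)^2)
          / (pochhammer (33/40) n * pochhammer (41/40) n * pochhammer (9/40) n * pochhammer (17/40) n)"
  using main[of n] unfolding Fs_def R_def by simp

end
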